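(* Let $f:G\to H$ be a group homomorphism. Then $\mathrm{sec}(f)\leq \sigma(\mathfrak{L}(f))$, and equality holds whenever the poset $\mathfrak{L}(f)$ is Noetherian (for example, when $H$ is finite or, more generally, Noetherian).
   Context: For a subgroup $L\le H$, a local section of $f$ on $L$ is a homomorphism $s:L\to G$ with $f\circ s=\mathrm{incl}_L$. The sectional number $\mathrm{sec}(f)$ is the least positive integer $m$ such that there exist proper subgroups $H_1,\ldots,H_m$ of $H$ with $H=H_1\cup\cdots\cup H_m$ and such that $f$ admits a local section on each $H_i$; $\mathrm{sec}(f)=\infty$ if no such $m$ exists. $\mathfrak{L}(f)$ is the poset, ordered by inclusion, of all proper subgroups of $H$ on which $f$ admits a local section. For a poset $P$ whose elements are subsets of a fixed set $X$ (here $X=H$), $\sigma(P)$ is the least positive integer $m$ such that there exist maximal elements $M_1,\ldots,M_m$ of $P$ with $X=M_1\cup\cdots\cup M_m$ ($\infty$ if none). A poset is Noetherian if every ascending chain $x_1\le x_2\le\cdots$ eventually stabilizes. *)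

theory Defs
  imports "HOL-Algebra.Algebra" "HOL-Library.Extended_Nat"
begin

definition has_local_section ::
  "('a, 'c) monoid_scheme \<Rightarrow> ('b, 'd) monoid_scheme \<Rightarrow> ('a \<Rightarrow> 'b) \<Rightarrow> 'b set \<Rightarrow> bool" where
  "has_local_section G H f L \<longleftrightarrow>
     (\<exists>s. s \<in> hom (H\<lparr>carrier := L\<rparr>) G \<and> (\<forall>x\<in>L. f (s x) = x))"

(* sectional number sec(f); Inf of the empty set of enat is \<infinity> *)
definition sectional_number ::
  "('a, 'c) monoid_scheme \<Rightarrow> ('b, 'd) monoid_scheme \<Rightarrow> ('a \<Rightarrow> 'b) \<Rightarrow> enat" where
  "sectional_number G H f = Inf {enat m | m. 0 < m \<and>
     (\<exists>Hs :: nat \<Rightarrow> 'b set.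
        (\<forall>i<m. subgroup (Hs i) H \<and> Hs i \<noteq> carrier H \<and> has_local_section G H f (Hs i)) \<and>
        (\<Union>i<m. Hs i) = carrier H)}"

definition local_section_poset ::
  "('a, 'c) monoid_scheme \<Rightarrow> ('b, 'd) monoid_scheme \<Rightarrow> ('a \<Rightarrow> 'b) \<Rightarrow> 'b set set" where
  "local_section_poset G H f =
     {L. subgroup L H \<and> L \<noteq> carrier H \<and> has_local_section G H f L}"

definition maximal_in :: "'b set set \<Rightarrow> 'b set \<Rightarrow> bool" where
  "maximal_in P A \<longleftrightarrow> A \<in> P \<and> (\<forall>B\<in>P. A \<subseteq> B \<longrightarrow> B = A)"

definition sigma_cover :: "'b set \<Rightarrow> 'b set set \<Rightarrow> enat" where
  "sigma_cover U P = Inf {enat m | m. 0 < m \<and>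
     (\<exists>Ms :: nat \<Rightarrow> 'b set. (\<forall>i<m. maximal_in P (Ms i)) \<and> (\<Union>i<m. Ms i) = U)}"

definition noetherian_poset :: "'b set set \<Rightarrow> bool" where
  "noetherian_poset P \<longleftrightarrow>
     (\<forall>c :: nat \<Rightarrow> 'b set. (\<forall>n. c n \<in> P) \<and> (\<forall>n. c n \<subseteq> c (Suc n))
        \<longrightarrow> (\<exists>N. \<forall>n\<ge>N. c n = c N))"

end

theory Submission
  imports Defs
begin

lemma t1:
  assumes na: "\<not> (\<exists>M. maximal_in P M \<and> A \<subseteq> M)" and "B \<in> P" "A \<subseteq> B"
  shows "\<exists>B'. B' \<in> P \<and> B \<subset> B'"
proof -
    have "\<not> maximal_in P B" using na assms(3) by blast
    then show ?thesis using assms unfolding maximal_in_def by blast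
qed

lemma t2:
  assumes na: "\<not> (\<exists>M. maximal_in P M \<and> A \<subseteq> M)" and AP: "A \<in> P"
  shows "\<exists>c. (\<forall>n. c n \<in> P) \<and> (\<forall>n. c n \<subset> c (Suc n))"
proof -
  define nxt where "nxt B = (SOME B'. B' \<in> P \<and> B \<subset> B')" for B
  have nx: "nxt B \<in> P \<and> B \<subset> nxt B" if "B \<in> P" "A \<subseteq> B" for B
    unfolding nxt_def using someI_ex[OF t1[OF na that]] .
  define c where "c n = (nxt ^^ n) A" for n
  have cS: "c (Suc n) = nxt (c n)" for n by (simp add: c_def)
  have iv: "c n \<in> P \<and> A \<subseteq> c n" for n
  proof (induction n)
    case 0 then show ?case using AP by (simp add: c_def)
  next
    case (Suc n)
    then have "nxt (c n) \<in> P \<and> c n \<subset> nxt (c n)" using nx by blast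
    then show ?case using Suc cS by auto
  qed
  have strict: "c n \<subset> c (Suc n)" for n
    using nx[of "c n"] iv[of n] cS[of n] by auto
  show ?thesis using iv strict by blast
qed

lemma exists_maximal:
  assumes nP: "noetherian_poset P" and AP: "A \<in> P"
  shows "\<exists>M. maximal_in P M \<and> A \<subseteq> M"
proof (rule ccontr)
  assume na: "\<not> (\<exists>M. maximal_in P M \<and> A \<subseteq> M)"
  from t2[OF na AP] obtain c where c1: "\<forall>n. c n \<in> P" and c2: "\<forall>n. c n \<subset> c (Suc n)"
    by (elim exE conjE)
  have c3: "\<forall>n. c n \<subseteq> c (Suc n)" using c2 by (simp add: psubset_imp_subset)
  have "\<exists>N. \<forall>n\<ge>N. c n = c N"
    using nP unfolding noetherian_poset_def
    apply (elim allE[where x=c])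
    apply (erule mp)
    using c1 c3 by (rule conjI)
  then obtain N where "\<forall>n\<ge>N. c n = c N" by (elim exE)
  then have "c (Suc N) = c N" by (elim allE[where x="Suc N"]) (erule mp, rule le_SucI, rule order_refl)
  moreover have "c N \<subset> c (Suc N)" using c2 by (rule spec)
  ultimately show False by (metis less_irrefl)
qed

theorem theorem3p12:
  fixes G :: "('a, 'c) monoid_scheme" and H :: "('b, 'd) monoid_scheme" and f :: "'a \<Rightarrow> 'b"
  assumes "group G" and "group H" and "f \<in> hom G H"
  shows "sectional_number G H f \<le> sigma_cover (carrier H) (local_section_poset G H f) \<and>
         (noetherian_poset (local_section_poset G H f) \<longrightarrow>
          sectional_number G H f = sigma_cover (carrier H) (local_section_poset G H f))"
proof -
  define P where "P = local_section_poset G H f"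
  define S1 where "S1 = {enat m | m. 0 < m \<and>
     (\<exists>Hs :: nat \<Rightarrow> 'b set.
        (\<forall>i<m. subgroup (Hs i) H \<and> Hs i \<noteq> carrier H \<and> has_local_section G H f (Hs i)) \<and>
        (\<Union>i<m. Hs i) = carrier H)}"
  define S2 where "S2 = {enat m | m. 0 < m \<and>
     (\<exists>Ms :: nat \<Rightarrow> 'b set. (\<forall>i<m. maximal_in P (Ms i)) \<and> (\<Union>i<m. Ms i) = carrier H)}"
  have e1: "sectional_number G H f = Inf S1" unfolding S1_def sectional_number_def by simp
  have e2: "sigma_cover (carrier H) P = Inf S2" unfolding S2_def sigma_cover_def by simp
  have sub1: "S2 \<subseteq> S1"
  proof
    fix x assume "x \<in> S2"
    then obtain m Ms where "x = enat m" "0 < m" "\<forall>i<m. maximal_in P (Ms i)" "(\<Union>i<m. Ms i) = carrier H"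
      unfolding S2_def by blast
    then have "\<forall>i<m. subgroup (Ms i) H \<and> Ms i \<noteq> carrier H \<and> has_local_section G H f (Ms i)"
      unfolding maximal_in_def P_def local_section_poset_def by simp
    then show "x \<in> S1" unfolding S1_def using \<open>x = enat m\<close> \<open>0 < m\<close> \<open>(\<Union>i<m. Ms i) = carrier H\<close> by blast
  qed
  have sub2: "S1 \<subseteq> S2" if nP: "noetherian_poset P"
  proof
    fix x assume "x \<in> S1"
    then obtain m Hs where hx: "x = enat m" "0 < m"
      and hs: "\<forall>i<m. Hs i \<in> P" and hu: "(\<Union>i<m. Hs i) = carrier H"
      unfolding S1_def P_def local_section_poset_def by blast
    define Ms where "Ms i = (SOME M. maximal_in P M \<and> Hs i \<subseteq> M)" for i
    have ms: "maximal_in P (Ms i) \<and> Hs i \<subseteq> Ms i" if "i < m" for i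
      unfolding Ms_def by (rule someI_ex) (use exists_maximal[OF nP] hs that in blast)
    have "(\<Union>i<m. Ms i) = carrier H"
    proof
      show "(\<Union>i<m. Ms i) \<subseteq> carrier H"
      proof (rule UN_least)
        fix i assume "i \<in> {..<m}"
        then have "Ms i \<in> P" using ms unfolding maximal_in_def by auto
        then show "Ms i \<subseteq> carrier H" unfolding P_def local_section_poset_def
          using subgroup.subset by blast
      qed
      show "carrier H \<subseteq> (\<Union>i<m. Ms i)" using hu ms by blast
    qed
    moreover have "\<forall>i<m. maximal_in P (Ms i)" using ms by blast
    ultimately show "x \<in> S2" unfolding S2_def using hx by blast
  qed
  show ?thesis
  proof (intro conjI impI)
    show "sectional_number G H f \<le> sigma_cover (carrier H) (local_section_poset G H f)"
      unfolding P_def[symmetric] e1 e2 by (rule Inf_superset_mono[OF sub1])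
    assume "noetherian_poset (local_section_poset G H f)"
    then have "S1 = S2" using sub1 sub2 unfolding P_def by blast
    then show "sectional_number G H f = sigma_cover (carrier H) (local_section_poset G H f)"
      unfolding P_def[symmetric] e1 e2 by simp
  qed
qed

end
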